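(* Let $P$ be a finite poset. If $I\subseteq P$ is a poset ideal, then $\mathfrak{p}(I)=(x_p)_{p\in I}\subseteq k[x_P]$ is a $P$-stable monomial prime ideal. Conversely every $P$-stable monomial prime ideal $\mathfrak{p}(S)=(x_p)_{p\in S}$, $S\subseteq P$, is of this form, i.e. $S$ is a poset ideal.
   Context: $k$ is a field and $k[x_P]$ the polynomial ring in variables $x_p$, $p\in P$. For $b\in P$, a $b$-chain is a multichain $C: p_1\le\dots\le p_r$ with $p_r\le b$; its length is $r$, $m_C=\prod x_{p_i}$; $C$ is in a monomial $m$ if $m_C\mid m$; a longest $b$-chain in $m$ is one of maximal length among $b$-chains in $m$; $C$ goes through $a$ if $a\le b$ and $a$ is comparable to every $p_i$. For an antichain $B$, $m_B=\prod_{b\in B}x_b$. A monomial ideal $I$ is $P$-stable if whenever $m=n\,m_B\in I$ ($n$ a monomial, $B$ an antichain) and $a\in P$ is such that for every $b\in B$ some longest $b$-chain in $m$ goes through $a$, then $n\,x_a\in I$. *)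

theory Defs
  imports Main "HOL-Library.Multiset"
begin

text \<open>The poset is a finite subset P of a partially ordered type 'a (with the induced order).
Monomials of k[x_P] are represented by finite multisets over P (exponent vectors).
A monomial ideal is determined by the set of monomials it contains, so we represent it
by that set: a set of monomials closed under multiplication by monomials.\<close>

definition monomial :: "'a set \<Rightarrow> 'a multiset \<Rightarrow> bool" where
  "monomial P m \<longleftrightarrow> set_mset m \<subseteq> P"

definition monomial_ideal :: "'a set \<Rightarrow> 'a multiset set \<Rightarrow> bool" where
  "monomial_ideal P I \<longleftrightarrow> (\<forall>m\<in>I. monomial P m) \<and>
     (\<forall>m\<in>I. \<forall>n. monomial P n \<longrightarrow> m + n \<in> I)"

definition prime_mon_ideal :: "'a set \<Rightarrow> 'a set \<Rightarrow> 'a multiset set" where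
  "prime_mon_ideal P S = {m. monomial P m \<and> (\<exists>p\<in>S. p \<in># m)}"

definition poset_ideal :: "'a::order set \<Rightarrow> 'a set \<Rightarrow> bool" where
  "poset_ideal P I \<longleftrightarrow> I \<subseteq> P \<and> (\<forall>p\<in>I. \<forall>q\<in>P. q \<le> p \<longrightarrow> q \<in> I)"

definition antichain_in :: "'a::order set \<Rightarrow> 'a set \<Rightarrow> bool" where
  "antichain_in P B \<longleftrightarrow> B \<subseteq> P \<and> (\<forall>x\<in>B. \<forall>y\<in>B. x \<le> y \<longrightarrow> x = y)"

definition b_chain :: "'a::order set \<Rightarrow> 'a \<Rightarrow> 'a list \<Rightarrow> bool" where
  "b_chain P b C \<longleftrightarrow> set C \<subseteq> P \<and> sorted_wrt (\<le>) C \<and> (\<forall>p\<in>set C. p \<le> b)"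

definition chain_in :: "'a list \<Rightarrow> 'a multiset \<Rightarrow> bool" where
  "chain_in C m \<longleftrightarrow> mset C \<subseteq># m"

definition longest_b_chain :: "'a::order set \<Rightarrow> 'a \<Rightarrow> 'a list \<Rightarrow> 'a multiset \<Rightarrow> bool" where
  "longest_b_chain P b C m \<longleftrightarrow> b_chain P b C \<and> chain_in C m \<and>
     (\<forall>C'. b_chain P b C' \<and> chain_in C' m \<longrightarrow> length C' \<le> length C)"

definition goes_through :: "'a::order \<Rightarrow> 'a \<Rightarrow> 'a list \<Rightarrow> bool" where
  "goes_through a b C \<longleftrightarrow> a \<le> b \<and> (\<forall>p\<in>set C. a \<le> p \<or> p \<le> a)"

definition P_stable :: "'a::order set \<Rightarrow> 'a multiset set \<Rightarrow> bool" where
  "P_stable P I \<longleftrightarrow>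
     (\<forall>n B a. monomial P n \<and> antichain_in P B \<and> n + mset_set B \<in> I \<and> a \<in> P \<and>
        (\<forall>b\<in>B. \<exists>C. longest_b_chain P b C (n + mset_set B) \<and> goes_through a b C)
        \<longrightarrow> n + {#a#} \<in> I)"

end

theory Submission
  imports Defs
begin

theorem lemma3p17:
  fixes P :: "'a::order set"
  assumes "finite P"
  shows "(\<forall>I. poset_ideal P I \<longrightarrow>
            monomial_ideal P (prime_mon_ideal P I) \<and> P_stable P (prime_mon_ideal P I))
       \<and> (\<forall>S. S \<subseteq> P \<and> P_stable P (prime_mon_ideal P S) \<longrightarrow> poset_ideal P S)"
proof (intro conjI allI impI)
  fix I assume I: "poset_ideal P I"
  show "monomial_ideal P (prime_mon_ideal P I)"
    unfolding monomial_ideal_def prime_mon_ideal_def monomial_def by auto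
  show "P_stable P (prime_mon_ideal P I)"
    unfolding P_stable_def
  proof (intro allI impI, elim conjE)
    fix n B a
    assume n: "monomial P n" and B: "antichain_in P B"
      and m: "n + mset_set B \<in> prime_mon_ideal P I" and a: "a \<in> P"
      and ch: "\<forall>b\<in>B. \<exists>C. longest_b_chain P b C (n + mset_set B) \<and> goes_through a b C"
    from m obtain p where p: "p \<in> I" "p \<in># n + mset_set B"
      unfolding prime_mon_ideal_def by auto
    have mon: "monomial P (n + {#a#})" using n a by (auto simp: monomial_def)
    show "n + {#a#} \<in> prime_mon_ideal P I"
    proof (cases "p \<in># n")
      case True then show ?thesis using mon p unfolding prime_mon_ideal_def by auto
    next
      case False
      then have "p \<in># mset_set B" using p by auto
      then have pB: "p \<in> B" by (metis elem_mset_set empty_iff finite_set_mset_mset_set mset_set.infinite set_mset_empty)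
      with ch obtain C where "goes_through a p C" by blast
      then have "a \<le> p" by (simp add: goes_through_def)
      with I p a have "a \<in> I" by (auto simp: poset_ideal_def)
      then show ?thesis using mon unfolding prime_mon_ideal_def by auto
    qed
  qed
next
  fix S assume S: "S \<subseteq> P \<and> P_stable P (prime_mon_ideal P S)"
  show "poset_ideal P S"
    unfolding poset_ideal_def
  proof (intro conjI ballI impI)
    show "S \<subseteq> P" using S by blast
    fix p q assume p: "p \<in> S" and q: "q \<in> P" and qp: "q \<le> p"
    have pP: "p \<in> P" using S p by blast
    have len: "length C' \<le> 1" if "mset C' \<subseteq># {#p#}" for C' :: "'a list"
    proof -
      have "size (mset C') \<le> size ({#p#})" using that by (rule size_mset_mono)
      then show ?thesis by simp
    qed
    have lc: "longest_b_chain P p [p] ({#} + mset_set {p})"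
      unfolding longest_b_chain_def b_chain_def chain_in_def
      using pP len by auto
    have gt: "goes_through q p [p]" using qp by (simp add: goes_through_def)
    have anti: "antichain_in P {p}" using pP by (simp add: antichain_in_def)
    have mem: "{#} + mset_set {p} \<in> prime_mon_ideal P S"
      using p pP by (simp add: prime_mon_ideal_def monomial_def)
    have "{#} + {#q#} \<in> prime_mon_ideal P S"
      using S[THEN conjunct2, unfolded P_stable_def, rule_format, of "{#}" "{p}" q]
        anti mem q lc gt by (auto simp: monomial_def)
    then show "q \<in> S" by (simp add: prime_mon_ideal_def)
  qed
qed

end
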